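(* Let $z\ge1$, $X\subset[\Delta]^d$ finite, and let $C\subseteq X$ be a constant-factor approximation to the optimal $(k,z)$-medoids clustering on $X$. For a point $x\in X$, let $u$ be a center of $C$ closest to $x$ (ties broken arbitrarily). Then for any center $c\in C\setminus\{u\}$, \[\min_{p\in C\cup\{x\}\setminus\{c\}}\|c-p\|_2^z\le\min_{p\in C\setminus\{c\}}\|c-p\|_2^z\le2^{z+1}\min_{p\in C\cup\{x\}\setminus\{c\}}\|c-p\|_2^z.\]
   Context: The $(k,z)$-medoids clustering problem on $X$ asks for a set $C\subseteq X$ with $|C|\le k$ minimizing $\sum_{y\in X}\min_{c\in C}\|y-c\|_2^z$. *)

theory Defs
  imports "HOL-Analysis.Analysis"
begin

definition grid :: "nat \<Rightarrow> (real^'d) set" where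
  "grid \<Delta> = {x. \<forall>i. x $ i \<in> real ` {1..\<Delta>}}"

definition medoid_cost :: "real \<Rightarrow> (real^'d) set \<Rightarrow> (real^'d) set \<Rightarrow> real" where
  "medoid_cost z X C = (\<Sum>y\<in>X. Min ((\<lambda>c. norm (y - c) powr z) ` C))"

definition opt_medoid_cost :: "nat \<Rightarrow> real \<Rightarrow> (real^'d) set \<Rightarrow> real" where
  "opt_medoid_cost k z X =
     (INF C\<in>{C. C \<subseteq> X \<and> C \<noteq> {} \<and> card C \<le> k}. medoid_cost z X C)"

definition approx_medoids :: "real \<Rightarrow> nat \<Rightarrow> real \<Rightarrow> (real^'d) set \<Rightarrow> (real^'d) set \<Rightarrow> bool" where
  "approx_medoids \<alpha> k z X C \<longleftrightarrow>
     C \<subseteq> X \<and> C \<noteq> {} \<and> card C \<le> k \<and> medoid_cost z X C \<le> \<alpha> * opt_medoid_cost k z X"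

end

theory Submission
  imports Defs
begin

theorem lemma3p7:
  fixes X C :: "(real^'d) set" and x u c :: "real^'d"
    and z \<alpha> :: real and k \<Delta> :: nat
  assumes "z \<ge> 1"
    and "finite X" and "X \<subseteq> grid \<Delta>"
    and "\<alpha> \<ge> 1" and "approx_medoids \<alpha> k z X C"
    and "x \<in> X"
    and "u \<in> C" and "\<forall>c'\<in>C. norm (x - u) \<le> norm (x - c')"
    and "c \<in> C - {u}"
  shows "Min ((\<lambda>p. norm (c - p) powr z) ` ((C \<union> {x}) - {c}))
           \<le> Min ((\<lambda>p. norm (c - p) powr z) ` (C - {c}))
         \<and> Min ((\<lambda>p. norm (c - p) powr z) ` (C - {c}))
           \<le> 2 powr (z + 1) * Min ((\<lambda>p. norm (c - p) powr z) ` ((C \<union> {x}) - {c}))"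
proof -
  define f where "f = (\<lambda>p. norm (c - p) powr z)"
  have CX: "C \<subseteq> X" using assms(5) unfolding approx_medoids_def by auto
  have fC: "finite C" using CX assms(2) finite_subset by blast
  have uin: "u \<in> C - {c}" using assms(7,9) by auto
  have fin1: "finite (f ` (C - {c}))" using fC by auto
  have fin2: "finite (f ` ((C \<union> {x}) - {c}))" using fC by auto
  have ne1: "f ` (C - {c}) \<noteq> {}" using uin by auto
  have ne2: "f ` ((C \<union> {x}) - {c}) \<noteq> {}" using uin by auto
  have sub: "f ` (C - {c}) \<subseteq> f ` ((C \<union> {x}) - {c})" by auto
  have A: "Min (f ` ((C \<union> {x}) - {c})) \<le> Min (f ` (C - {c}))"
    using Min_antimono[OF sub ne1 fin2] .
  have p2: "(2::real) powr (z+1) \<ge> 1" using assms(1) by (simp add: ge_one_powr_ge_zero)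
  have key: "Min (f ` (C - {c})) \<le> 2 powr (z+1) * f p" if p: "p \<in> (C \<union> {x}) - {c}" for p
  proof (cases "p \<in> C")
    case True
    have "Min (f ` (C - {c})) \<le> f p" using True p fin1 by (intro Min_le) auto
    also have "\<dots> \<le> 2 powr (z+1) * f p"
      using p2 mult_right_mono[OF p2, of "f p"] by (simp add: f_def)
    finally show ?thesis .
  next
    case False
    then have px: "p = x" using p by auto
    have "norm (x - u) \<le> norm (x - c)" using assms(8,9) by auto
    then have "norm (c - u) \<le> 2 * norm (c - x)"
      using norm_triangle_ineq[of "c - x" "x - u"] by (simp add: norm_minus_commute)
    then have "norm (c - u) powr z \<le> (2 * norm (c - x)) powr z"
      using assms(1) by (intro powr_mono2) auto
    also have "\<dots> = 2 powr z * norm (c - x) powr z" by (simp add: powr_mult)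
    also have "\<dots> \<le> 2 powr (z+1) * norm (c - x) powr z"
      by (intro mult_right_mono) auto
    finally have "f u \<le> 2 powr (z+1) * f p" unfolding f_def px .
    moreover have "Min (f ` (C - {c})) \<le> f u" using uin fin1 by (intro Min_le) auto
    ultimately show ?thesis by linarith
  qed
  obtain p where pin: "p \<in> (C \<union> {x}) - {c}" and pm: "f p = Min (f ` ((C \<union> {x}) - {c}))"
  proof -
    have "Min (f ` ((C \<union> {x}) - {c})) \<in> f ` ((C \<union> {x}) - {c})" using Min_in[OF fin2 ne2] .
    then show ?thesis using that by (metis imageE)
  qed
  show ?thesis using A key[OF pin] pm unfolding f_def by simp
qed

end
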